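(* Let $a,b\in\mathbb F^*$, let $g,h\in\mathcal R$ with $x^n-a=hg$, and set $\hat a=a\,b\,\theta^n(b^{-1})$. Then $gb$ is a right divisor of $x^n-\hat a$ and $$M^\theta_{\hat a}(\overline{gb})=M^\theta_a(\overline g)\,M^\theta_{\hat a}(\overline b).$$ Consequently the codes $\mathfrak v_a(\mathcal R\overline g)$ and $\mathfrak v_{\hat a}(\mathcal R\overline{gb})$ are scale-equivalent, i.e. there are nonzero $d_0,\dots,d_{n-1}\in\mathbb F$ such that $(u_0,\dots,u_{n-1})\mapsto(d_0u_0,\dots,d_{n-1}u_{n-1})$ maps the first code onto the second; in particular the two codes have the same Hamming weight enumerator and the same minimum Hamming distance.
   Context: $\mathbb F$ is a finite field, $\theta\in\mathrm{Aut}(\mathbb F)$, $\mathcal R=\mathbb F[x;\theta]$ the skew polynomial ring (elements $\sum f_ix^i$ with left coefficients, $xb=\theta(b)x$), $n\in\mathbb N$. For $e\in\mathbb F^*$, $\mathcal S_e=\mathcal R/\mathcal R(x^n-e)$, $\overline f$ is the coset of $f$ (in $M^\theta_e(\overline f)$ and $\mathfrak v_e(\cdot)$ taken in $\mathcal S_e$), $\mathcal R\overline f$ the left submodule generated by $\overline f$, and $\mathfrak v_e:\mathcal S_e\to\mathbb F^n$ the inverse of $(c_0,\dots,c_{n-1})\mapsto\overline{\sum_{i=0}^{n-1}c_ix^i}$. $M^\theta_e(\overline f)$ is the $n\times n$ matrix whose row with index $i$ ($0\le i\le n-1$) is $\mathfrak v_e(\overline{x^if})$. *)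

theory Defs
  imports "HOL-Computational_Algebra.Polynomial" "Jordan_Normal_Form.Matrix"
begin

definition field_aut :: "('a::field \<Rightarrow> 'a) \<Rightarrow> bool" where
  "field_aut \<theta> \<longleftrightarrow> bij \<theta> \<and> (\<forall>x y. \<theta> (x + y) = \<theta> x + \<theta> y) \<and> (\<forall>x y. \<theta> (x * y) = \<theta> x * \<theta> y)"

text \<open>Skew polynomials F[x;theta] are represented by their (left) coefficient
  sequences, i.e. by ordinary polynomials; the ring product is the skew product
  (sum f_i x^i)(sum g_j x^j) = sum f_i theta^i(g_j) x^(i+j).\<close>
definition skew_mult :: "('a::field \<Rightarrow> 'a) \<Rightarrow> 'a poly \<Rightarrow> 'a poly \<Rightarrow> 'a poly" where
  "skew_mult \<theta> f g =
     (\<Sum>i\<le>degree f. \<Sum>j\<le>degree g. monom (coeff f i * (\<theta> ^^ i) (coeff g j)) (i + j))"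

definition xn_minus :: "nat \<Rightarrow> 'a::field \<Rightarrow> 'a poly" where
  "xn_minus n e = monom 1 n - [:e:]"

definition skew_right_dvd :: "('a::field \<Rightarrow> 'a) \<Rightarrow> 'a poly \<Rightarrow> 'a poly \<Rightarrow> bool" where
  "skew_right_dvd \<theta> g f \<longleftrightarrow> (\<exists>q. f = skew_mult \<theta> q g)"

text \<open>Canonical representative (degree < n) of the coset of f in S_e = R / R(x^n - e).\<close>
definition skew_rem :: "('a::field \<Rightarrow> 'a) \<Rightarrow> nat \<Rightarrow> 'a \<Rightarrow> 'a poly \<Rightarrow> 'a poly" where
  "skew_rem \<theta> n e f =
     (THE r. degree r < n \<and> (\<exists>q. f = r + skew_mult \<theta> q (xn_minus n e)))"

definition skew_vec :: "('a::field \<Rightarrow> 'a) \<Rightarrow> nat \<Rightarrow> 'a \<Rightarrow> 'a poly \<Rightarrow> 'a vec" where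
  "skew_vec \<theta> n e f = vec n (\<lambda>j. coeff (skew_rem \<theta> n e f) j)"

definition skew_mat :: "('a::field \<Rightarrow> 'a) \<Rightarrow> nat \<Rightarrow> 'a \<Rightarrow> 'a poly \<Rightarrow> 'a mat" where
  "skew_mat \<theta> n e f =
     mat n n (\<lambda>(i, j). coeff (skew_rem \<theta> n e (skew_mult \<theta> (monom 1 i) f)) j)"

definition skew_code :: "('a::field \<Rightarrow> 'a) \<Rightarrow> nat \<Rightarrow> 'a \<Rightarrow> 'a poly \<Rightarrow> 'a vec set" where
  "skew_code \<theta> n e g = {skew_vec \<theta> n e (skew_mult \<theta> f g) | f. True}"

definition hamming_wt :: "'a::zero vec \<Rightarrow> nat" where
  "hamming_wt u = card {i. i < dim_vec u \<and> u $ i \<noteq> 0}"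

definition hamming_dist :: "'a vec \<Rightarrow> 'a vec \<Rightarrow> nat" where
  "hamming_dist u v = card {i. i < dim_vec u \<and> u $ i \<noteq> v $ i}"

definition min_dist :: "'a vec set \<Rightarrow> nat" where
  "min_dist C = Inf {hamming_dist u v | u v. u \<in> C \<and> v \<in> C \<and> u \<noteq> v}"

end

theory Submission
  imports Defs
begin


locale thA =
  fixes \<theta> :: "'a::field \<Rightarrow> 'a"
  assumes add: "\<And>x y. \<theta> (x + y) = \<theta> x + \<theta> y"
    and mul: "\<And>x y. \<theta> (x * y) = \<theta> x * \<theta> y"
    and one: "\<theta> 1 = 1"
begin
lemma zero: "\<theta> 0 = 0" proof - have "\<theta> 0 + \<theta> 0 = \<theta> 0 + 0" using add[of 0 0] by simp thus ?thesis by (rule add_left_imp_eq) qed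
lemma pz[simp]: "(\<theta>^^i) 0 = 0" by (induction i) (auto simp: zero)
lemma po[simp]: "(\<theta>^^i) 1 = 1" by (induction i) (auto simp: one)
lemma pm: "(\<theta>^^i) (x*y) = (\<theta>^^i) x * (\<theta>^^i) y" by (induction i) (auto simp: mul)
lemma pinv: "x \<noteq> 0 \<Longrightarrow> (\<theta>^^i) (inverse x) = inverse ((\<theta>^^i) x)"
proof -
  assume "x \<noteq> 0"
  hence "(\<theta>^^i) x * (\<theta>^^i) (inverse x) = 1" by (simp add: pm[symmetric])
  thus ?thesis by (metis inverse_unique)
qed

lemma coeff_sm: "coeff (skew_mult \<theta> f g) k = (\<Sum>i\<le>k. coeff f i * (\<theta>^^i) (coeff g (k - i)))"
proof -
  have "coeff (skew_mult \<theta> f g) k = (\<Sum>i\<le>degree f. \<Sum>j\<le>degree g. if i + j = k then coeff f i * (\<theta> ^^ i) (coeff g j) else 0)"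
    by (simp add: skew_mult_def coeff_sum coeff_monom)
  also have "\<dots> = (\<Sum>i\<le>degree f. if i \<le> k then coeff f i * (\<theta>^^i) (coeff g (k - i)) else 0)"
  proof (rule sum.cong[OF refl])
    fix i assume "i \<in> {..degree f}"
    have "(\<Sum>j\<le>degree g. if i + j = k then coeff f i * (\<theta> ^^ i) (coeff g j) else 0)
       = (\<Sum>j\<le>degree g. if j = k - i then (if i \<le> k then coeff f i * (\<theta> ^^ i) (coeff g j) else 0) else 0)"
      by (rule sum.cong) auto
    also have "\<dots> = (if i \<le> k then coeff f i * (\<theta>^^i) (coeff g (k - i)) else 0)"
      by (auto simp: coeff_eq_0)
    finally show "(\<Sum>j\<le>degree g. if i + j = k then coeff f i * (\<theta> ^^ i) (coeff g j) else 0) = (if i \<le> k then coeff f i * (\<theta>^^i) (coeff g (k - i)) else 0)" .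
  qed
  also have "\<dots> = (\<Sum>i\<le>degree f + k. if i \<le> k then coeff f i * (\<theta>^^i) (coeff g (k - i)) else 0)"
    by (rule sum.mono_neutral_left) (auto simp: coeff_eq_0)
  also have "\<dots> = (\<Sum>i\<le>k. coeff f i * (\<theta>^^i) (coeff g (k - i)))"
    by (rule sum.mono_neutral_cong_right) auto
  finally show ?thesis .
qed

lemma sm_const_right: "coeff (skew_mult \<theta> f [:b:]) k = coeff f k * (\<theta>^^k) b"
proof -
  have "coeff (skew_mult \<theta> f [:b:]) k = (\<Sum>i\<le>k. if i = k then coeff f i * (\<theta>^^i) b else 0)"
    unfolding coeff_sm by (rule sum.cong) (auto simp: coeff_pCons split: nat.splits)
  thus ?thesis by simp
qed

lemma sm_const_left: "skew_mult \<theta> [:c:] f = Polynomial.smult c f"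
proof (rule poly_eqI)
  fix k
  have "coeff (skew_mult \<theta> [:c:] f) k = (\<Sum>i\<le>k. if i = 0 then c * coeff f k else 0)"
    unfolding coeff_sm by (rule sum.cong) (auto simp: coeff_pCons split: nat.splits)
  thus "coeff (skew_mult \<theta> [:c:] f) k = coeff (Polynomial.smult c f) k" by simp
qed

lemma sm_add: "skew_mult \<theta> (p + q) r = skew_mult \<theta> p r + skew_mult \<theta> q r"
  by (rule poly_eqI) (simp add: coeff_sm distrib_right sum.distrib)
lemma sm_diff: "skew_mult \<theta> (p - q) r = skew_mult \<theta> p r - skew_mult \<theta> q r"
  by (rule poly_eqI) (simp add: coeff_sm left_diff_distrib sum_subtractf)
lemma sm_zero[simp]: "skew_mult \<theta> 0 r = 0"
  by (rule poly_eqI) (simp add: coeff_sm)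
lemma sm_addr: "skew_mult \<theta> (p + q) [:b:] = skew_mult \<theta> p [:b:] + skew_mult \<theta> q [:b:]"
  by (rule sm_add)

lemma assoc_rc: "skew_mult \<theta> (skew_mult \<theta> f g) [:b:] = skew_mult \<theta> f (skew_mult \<theta> g [:b:])"
proof (rule poly_eqI)
  fix k
  have "coeff (skew_mult \<theta> f (skew_mult \<theta> g [:b:])) k = (\<Sum>i\<le>k. coeff f i * (\<theta>^^i) (coeff g (k - i)) * (\<theta>^^k) b)"
    unfolding coeff_sm[of f]
  proof (rule sum.cong[OF refl])
    fix i assume "i \<in> {..k}"
    hence "(\<theta>^^i) ((\<theta>^^(k-i)) b) = (\<theta>^^k) b" proof -
      have "(\<theta>^^i) ((\<theta>^^(k-i)) b) = (\<theta>^^(i + (k-i))) b" by (simp add: funpow_add)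
      also have "i + (k - i) = k" using \<open>i \<in> {..k}\<close> by simp
      finally show ?thesis .
    qed
    thus "coeff f i * (\<theta> ^^ i) (coeff (skew_mult \<theta> g [:b:]) (k - i)) = coeff f i * (\<theta>^^i) (coeff g (k - i)) * (\<theta>^^k) b"
      by (simp add: sm_const_right pm)
  qed
  thus "coeff (skew_mult \<theta> (skew_mult \<theta> f g) [:b:]) k = coeff (skew_mult \<theta> f (skew_mult \<theta> g [:b:])) k"
    by (simp only: sm_const_right[of "skew_mult \<theta> f g"] coeff_sm[of f g] sum_distrib_right)
qed

lemma assoc_mc: "skew_mult \<theta> (skew_mult \<theta> q [:c:]) p = skew_mult \<theta> q (Polynomial.smult c p)"
proof (rule poly_eqI)
  fix k
  show "coeff (skew_mult \<theta> (skew_mult \<theta> q [:c:]) p) k = coeff (skew_mult \<theta> q (Polynomial.smult c p)) k"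
    unfolding coeff_sm[of "skew_mult \<theta> q [:c:]"] coeff_sm[of q "Polynomial.smult c p"]
    by (rule sum.cong[OF refl]) (simp add: sm_const_right pm mult.assoc)
qed

lemma sm_monom: "coeff (skew_mult \<theta> (monom c d) m) k = (if d \<le> k then c * (\<theta>^^d) (coeff m (k - d)) else 0)"
proof -
  have "coeff (skew_mult \<theta> (monom c d) m) k = (\<Sum>i\<le>k. if i = d then c * (\<theta>^^i) (coeff m (k - i)) else 0)"
    unfolding coeff_sm by (rule sum.cong) (auto simp: coeff_monom)
  thus ?thesis by simp
qed

lemma coeff_xn: "0 < n \<Longrightarrow> coeff (xn_minus n e) k = (if k = n then 1 else if k = 0 then - e else 0)"
  by (auto simp: xn_minus_def coeff_monom coeff_pCons split: nat.splits)

lemma deg_xn: "0 < n \<Longrightarrow> degree (xn_minus n e) = n"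
proof -
  assume n: "0 < n"
  show ?thesis
  proof (rule antisym)
    show "degree (xn_minus n e) \<le> n" by (rule degree_le) (simp add: coeff_xn[OF n])
    show "n \<le> degree (xn_minus n e)" by (rule le_degree) (simp add: coeff_xn[OF n])
  qed
qed

lemma sm_smult: "skew_mult \<theta> (Polynomial.smult c p) r = Polynomial.smult c (skew_mult \<theta> p r)"
  by (rule poly_eqI) (simp add: coeff_sm sum_distrib_left mult.assoc)

lemma deg_mult_xn:
  assumes n: "0 < n" and q: "q \<noteq> 0"
  shows "n \<le> degree (skew_mult \<theta> q (xn_minus n e))"
proof -
  let ?d = "degree q"
  have "coeff (skew_mult \<theta> q (xn_minus n e)) (?d + n) = (\<Sum>i\<le>?d + n. if i = ?d then coeff q ?d else 0)"
    unfolding coeff_sm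
  proof (rule sum.cong[OF refl])
    fix i assume "i \<in> {..?d + n}"
    show "coeff q i * (\<theta> ^^ i) (coeff (xn_minus n e) (?d + n - i)) = (if i = ?d then coeff q ?d else 0)"
    proof (cases "i < ?d")
      case True
      hence "?d + n - i \<noteq> n" "?d + n - i \<noteq> 0" using n by auto
      thus ?thesis using True by (simp add: coeff_xn[OF n])
    next
      case False
      show ?thesis
      proof (cases "i = ?d")
        case True thus ?thesis by (simp add: coeff_xn[OF n])
      next
        case False
        hence "i > ?d" using \<open>\<not> i < ?d\<close> by simp
        thus ?thesis by (simp add: coeff_eq_0)
      qed
    qed
  qed
  also have "\<dots> = coeff q ?d" by simp
  finally have "coeff (skew_mult \<theta> q (xn_minus n e)) (?d + n) \<noteq> 0" using q by simp
  hence "?d + n \<le> degree (skew_mult \<theta> q (xn_minus n e))" by (rule le_degree)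
  thus ?thesis by simp
qed

lemma rem_exists:
  assumes n: "0 < n"
  shows "\<exists>r q. degree r < n \<and> f = r + skew_mult \<theta> q (xn_minus n e)"
proof (induction "degree f" arbitrary: f rule: less_induct)
  case less
  show ?case
  proof (cases "degree f < n")
    case True
    thus ?thesis by (rule_tac x=f in exI, rule_tac x=0 in exI) simp
  next
    case False
    define d where "d = degree f - n"
    define c where "c = lead_coeff f"
    define f' where "f' = f - skew_mult \<theta> (monom c d) (xn_minus n e)"
    have ck: "coeff f' k = 0" if "k \<ge> degree f" for k
    proof -
      have dk: "d \<le> k" using that by (simp add: d_def)
      have "coeff f' k = coeff f k - c * (\<theta>^^d) (coeff (xn_minus n e) (k - d))"
        using dk by (simp add: f'_def sm_monom)
      moreover have "k - d \<ge> n" using that False by (simp add: d_def)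
      ultimately show ?thesis
        using that False n
        by (cases "k = degree f") (auto simp: coeff_xn[OF n] c_def d_def coeff_eq_0)
    qed
    have "degree f' < degree f"
    proof -
      have "degree f' \<le> degree f - 1"
        by (rule degree_le) (use ck in auto)
      thus ?thesis using False n by linarith
    qed
    then obtain r q where rq: "degree r < n" "f' = r + skew_mult \<theta> q (xn_minus n e)"
      using less by blast
    have "f = r + skew_mult \<theta> (q + monom c d) (xn_minus n e)"
      using rq(2) by (simp add: f'_def sm_add algebra_simps)
    thus ?thesis using rq(1) by blast
  qed
qed

lemma rem_unique:
  assumes n: "0 < n" and "degree r1 < n" "degree r2 < n"
    and eq: "r1 + skew_mult \<theta> q1 (xn_minus n e) = r2 + skew_mult \<theta> q2 (xn_minus n e)"
  shows "r1 = r2"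
proof -
  have e: "r1 - r2 = skew_mult \<theta> (q2 - q1) (xn_minus n e)"
    using eq by (simp add: sm_diff algebra_simps)
  show ?thesis
  proof (cases "q2 - q1 = 0")
    case True thus ?thesis using e by simp
  next
    case False
    have "n \<le> degree (r1 - r2)" using e deg_mult_xn[OF n False] by simp
    moreover have "degree (r1 - r2) \<le> max (degree r1) (degree r2)" by (rule degree_diff_le_max)
    ultimately show ?thesis using assms by simp
  qed
qed

lemma rem_eq:
  assumes n: "0 < n" and r: "degree r < n" and f: "f = r + skew_mult \<theta> q (xn_minus n e)"
  shows "skew_rem \<theta> n e f = r"
  unfolding skew_rem_def
proof (rule the_equality)
  show "degree r < n \<and> (\<exists>q. f = r + skew_mult \<theta> q (xn_minus n e))" using r f by blast
next
  fix r' assume "degree r' < n \<and> (\<exists>q. f = r' + skew_mult \<theta> q (xn_minus n e))"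
  then obtain q' where "degree r' < n" "f = r' + skew_mult \<theta> q' (xn_minus n e)" by blast
  thus "r' = r" using rem_unique[OF n _ r] f by metis
qed


lemma pnz: "b \<noteq> 0 \<Longrightarrow> (\<theta>^^i) b \<noteq> 0"
  using pm[of i b "inverse b"] by auto

lemma key_xn:
  assumes n: "0 < n" and b: "b \<noteq> 0"
  shows "skew_mult \<theta> (xn_minus n a) [:b:] = Polynomial.smult ((\<theta>^^n) b) (xn_minus n (a * b * (\<theta>^^n) (inverse b)))"
proof (rule poly_eqI)
  fix k
  have "(\<theta>^^n) b * (\<theta>^^n) (inverse b) = 1" using b by (simp add: pm[symmetric])
  thus "coeff (skew_mult \<theta> (xn_minus n a) [:b:]) k = coeff (Polynomial.smult ((\<theta>^^n) b) (xn_minus n (a * b * (\<theta>^^n) (inverse b)))) k"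
    using n by (auto simp: sm_const_right coeff_xn[OF n] algebra_simps)
qed

lemma deg_rc: "degree (skew_mult \<theta> r [:b:]) \<le> degree r"
  by (rule degree_le) (simp add: sm_const_right coeff_eq_0)

lemma rem_shift:
  assumes n: "0 < n" and b: "b \<noteq> 0"
  shows "skew_rem \<theta> n (a * b * (\<theta>^^n) (inverse b)) (skew_mult \<theta> f [:b:]) = skew_mult \<theta> (skew_rem \<theta> n a f) [:b:]"
proof -
  obtain r q where rq: "degree r < n" "f = r + skew_mult \<theta> q (xn_minus n a)"
    using rem_exists[OF n] by blast
  have rr: "skew_rem \<theta> n a f = r" by (rule rem_eq[OF n rq])
  have "skew_mult \<theta> f [:b:] = skew_mult \<theta> r [:b:] + skew_mult \<theta> (skew_mult \<theta> q [:(\<theta>^^n) b:]) (xn_minus n (a * b * (\<theta>^^n) (inverse b)))"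
    by (simp add: rq(2) sm_add assoc_rc key_xn[OF n b] assoc_mc)
  moreover have "degree (skew_mult \<theta> r [:b:]) < n" using deg_rc[of r b] rq(1) by simp
  ultimately show ?thesis using rem_eq[OF n] rr by metis
qed

lemma mono_rem: "0 < n \<Longrightarrow> degree r < n \<Longrightarrow> skew_rem \<theta> n e r = r"
  using rem_eq[of n r r 0] by simp

end

lemma field_aut_thA: "field_aut \<theta> \<Longrightarrow> thA \<theta>"
proof -
  assume fa: "field_aut \<theta>"
  hence add: "\<And>x y. \<theta> (x + y) = \<theta> x + \<theta> y" and mul: "\<And>x y. \<theta> (x * y) = \<theta> x * \<theta> y"
    and inj: "inj \<theta>" by (auto simp: field_aut_def bij_def)
  have z: "\<theta> 0 = 0"
  proof -
    have "\<theta> 0 + \<theta> 0 = \<theta> 0 + 0" using add[of 0 0] by simp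
    thus ?thesis by (rule add_left_imp_eq)
  qed
  have "\<theta> 1 * \<theta> 1 = \<theta> 1" using mul[of 1 1] by simp
  moreover have "\<theta> 1 \<noteq> 0" using inj z by (metis injD one_neq_zero)
  ultimately have "\<theta> 1 = 1" by (metis mult_cancel_right2)
  thus ?thesis using add mul by unfold_locales auto
qed


definition scl :: "nat \<Rightarrow> (nat \<Rightarrow> 'a::field) \<Rightarrow> 'a vec \<Rightarrow> 'a vec" where
  "scl n d u = vec n (\<lambda>i. d i * u $ i)"

lemma scl_wt: "dim_vec u = n \<Longrightarrow> \<forall>i<n. d i \<noteq> 0 \<Longrightarrow> hamming_wt (scl n d u) = hamming_wt u"
  unfolding hamming_wt_def scl_def by (intro arg_cong[where f=card] Collect_cong) auto

lemma scl_dist: "dim_vec u = n \<Longrightarrow> dim_vec v = n \<Longrightarrow> \<forall>i<n. d i \<noteq> 0 \<Longrightarrow> hamming_dist (scl n d u) (scl n d v) = hamming_dist u v"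
  unfolding hamming_dist_def scl_def by (intro arg_cong[where f=card] Collect_cong) auto

lemma scl_inj: "\<forall>i<n. d i \<noteq> 0 \<Longrightarrow> inj_on (scl n d) {u. dim_vec u = n}"
proof (rule inj_onI)
  fix u v assume d: "\<forall>i<n. d i \<noteq> 0" and u: "u \<in> {u. dim_vec u = n}" and v: "v \<in> {u. dim_vec u = n}"
    and e: "scl n d u = scl n d v"
  show "u = v"
  proof (rule eq_vecI)
    fix i assume i: "i < dim_vec v"
    have "scl n d u $ i = scl n d v $ i" using e by simp
    thus "u $ i = v $ i" using i u v d by (simp add: scl_def)
  qed (use u v in simp)
qed

lemma scl_facts:
  assumes d: "\<forall>i<n. d i \<noteq> 0" and C: "\<forall>u\<in>C. dim_vec u = n" and D: "scl n d ` C = D"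
  shows "(\<forall>k. card {u \<in> C. hamming_wt u = k} = card {u \<in> D. hamming_wt u = k}) \<and> min_dist C = min_dist D"
proof
  have "C \<subseteq> {u. dim_vec u = n}" using C by auto
  hence inj: "inj_on (scl n d) C" using scl_inj[OF d] by (rule inj_on_subset[rotated])
  show "\<forall>k. card {u \<in> C. hamming_wt u = k} = card {u \<in> D. hamming_wt u = k}"
  proof
    fix k
    have "{u \<in> D. hamming_wt u = k} = scl n d ` {u \<in> C. hamming_wt u = k}"
    proof (rule Set.set_eqI, rule iffI)
      fix u assume "u \<in> {u \<in> D. hamming_wt u = k}"
      then obtain u' where "u' \<in> C" "u = scl n d u'" "hamming_wt u = k" using D by blast
      moreover have "hamming_wt u' = hamming_wt u" using calculation C scl_wt[OF _ d] by simp
      ultimately show "u \<in> scl n d ` {u \<in> C. hamming_wt u = k}" by blast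
    next
      fix u assume "u \<in> scl n d ` {u \<in> C. hamming_wt u = k}"
      then obtain u' where "u' \<in> C" "u = scl n d u'" "hamming_wt u' = k" by blast
      moreover have "hamming_wt u' = hamming_wt u" using calculation C scl_wt[OF _ d] by simp
      ultimately show "u \<in> {u \<in> D. hamming_wt u = k}" using D by force
    qed
    moreover have "inj_on (scl n d) {u \<in> C. hamming_wt u = k}" using inj by (rule inj_on_subset) auto
    ultimately show "card {u \<in> C. hamming_wt u = k} = card {u \<in> D. hamming_wt u = k}"
      by (simp add: card_image)
  qed
  have "{hamming_dist u v | u v. u \<in> C \<and> v \<in> C \<and> u \<noteq> v} = {hamming_dist u v | u v. u \<in> D \<and> v \<in> D \<and> u \<noteq> v}"
  proof (rule Set.set_eqI, rule iffI)
    fix x assume "x \<in> {hamming_dist u v | u v. u \<in> C \<and> v \<in> C \<and> u \<noteq> v}"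
    then obtain u v where "x = hamming_dist u v" "u \<in> C" "v \<in> C" "u \<noteq> v" by blast
    hence "scl n d u \<noteq> scl n d v" using inj by (auto simp: inj_on_def)
    moreover have "x = hamming_dist (scl n d u) (scl n d v)"
      using \<open>x = _\<close> \<open>u \<in> C\<close> \<open>v \<in> C\<close> C scl_dist[OF _ _ d] by simp
    moreover have "scl n d u \<in> D" "scl n d v \<in> D" using D \<open>u \<in> C\<close> \<open>v \<in> C\<close> by auto
    ultimately show "x \<in> {hamming_dist u v | u v. u \<in> D \<and> v \<in> D \<and> u \<noteq> v}" by blast
  next
    fix x assume "x \<in> {hamming_dist u v | u v. u \<in> D \<and> v \<in> D \<and> u \<noteq> v}"
    then obtain u v where "x = hamming_dist u v" "u \<in> D" "v \<in> D" "u \<noteq> v" by blast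
    then obtain u' v' where "u = scl n d u'" "v = scl n d v'" "u' \<in> C" "v' \<in> C" using D by blast
    thus "x \<in> {hamming_dist u v | u v. u \<in> C \<and> v \<in> C \<and> u \<noteq> v}"
    proof -
      have "x = hamming_dist u' v'" using \<open>x = _\<close> \<open>u = _\<close> \<open>v = _\<close> \<open>u' \<in> C\<close> \<open>v' \<in> C\<close> C scl_dist[OF _ _ d] by simp
      moreover have "u' \<noteq> v'" using \<open>u \<noteq> v\<close> \<open>u = _\<close> \<open>v = _\<close> by auto
      ultimately show ?thesis using \<open>u' \<in> C\<close> \<open>v' \<in> C\<close> by blast
    qed
  qed
  thus "min_dist C = min_dist D" by (simp add: min_dist_def)
qed



theorem theorem5p4:
  fixes \<theta> :: "'a::{field,finite} \<Rightarrow> 'a" and n :: nat and a b :: 'a and g h :: "'a poly"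
  assumes "field_aut \<theta>" and "0 < n"
    and "a \<noteq> 0" and "b \<noteq> 0"
    and "xn_minus n a = skew_mult \<theta> h g"
  defines "ahat \<equiv> a * b * (\<theta> ^^ n) (inverse b)"
  shows "skew_right_dvd \<theta> (skew_mult \<theta> g [:b:]) (xn_minus n ahat)
       \<and> skew_mat \<theta> n ahat (skew_mult \<theta> g [:b:])
           = skew_mat \<theta> n a g * skew_mat \<theta> n ahat [:b:]
       \<and> (\<exists>d :: nat \<Rightarrow> 'a. (\<forall>i<n. d i \<noteq> 0) \<and>
            (\<lambda>u. vec n (\<lambda>i. d i * u $ i)) ` skew_code \<theta> n a g
              = skew_code \<theta> n ahat (skew_mult \<theta> g [:b:]))
       \<and> (\<forall>k. card {u \<in> skew_code \<theta> n a g. hamming_wt u = k}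
              = card {u \<in> skew_code \<theta> n ahat (skew_mult \<theta> g [:b:]). hamming_wt u = k})
       \<and> min_dist (skew_code \<theta> n a g) = min_dist (skew_code \<theta> n ahat (skew_mult \<theta> g [:b:]))"
proof -
  interpret thA \<theta> using field_aut_thA assms(1) .
  note n = assms(2) and b = assms(4)
  define c where "c = (\<theta>^^n) b"
  have c0: "c \<noteq> 0" unfolding c_def using pnz[OF b] .
  have key: "skew_mult \<theta> (xn_minus n a) [:b:] = Polynomial.smult c (xn_minus n ahat)"
    unfolding c_def ahat_def by (rule key_xn[OF n b])
  have P1: "skew_right_dvd \<theta> (skew_mult \<theta> g [:b:]) (xn_minus n ahat)"
    unfolding skew_right_dvd_def
  proof
    have "skew_mult \<theta> (Polynomial.smult (inverse c) h) (skew_mult \<theta> g [:b:])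
        = Polynomial.smult (inverse c) (skew_mult \<theta> (skew_mult \<theta> h g) [:b:])"
      by (simp add: sm_smult assoc_rc)
    also have "\<dots> = xn_minus n ahat" using c0 by (simp add: assms(5)[symmetric] key)
    finally show "xn_minus n ahat = skew_mult \<theta> (Polynomial.smult (inverse c) h) (skew_mult \<theta> g [:b:])" by simp
  qed
  have RS: "\<And>f. skew_rem \<theta> n ahat (skew_mult \<theta> f [:b:]) = skew_mult \<theta> (skew_rem \<theta> n a f) [:b:]"
    unfolding ahat_def by (rule rem_shift[OF n b])
  have Bent: "skew_mat \<theta> n ahat [:b:] $$ (j, l) = (if j = l then (\<theta>^^j) b else 0)" if "j < n" "l < n" for j l
  proof -
    have mb: "skew_mult \<theta> (monom 1 j) [:b:] = monom ((\<theta>^^j) b) j"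
      by (rule poly_eqI) (auto simp: sm_monom coeff_pCons coeff_monom split: nat.splits)
    have "degree (monom ((\<theta>^^j) b) j) < n" using degree_monom_le[of "(\<theta>^^j) b" j] that by linarith
    hence "skew_rem \<theta> n ahat (skew_mult \<theta> (monom 1 j) [:b:]) = monom ((\<theta>^^j) b) j"
      unfolding mb by (rule mono_rem[OF n])
    thus ?thesis using that by (simp add: skew_mat_def coeff_monom)
  qed
  have P2: "skew_mat \<theta> n ahat (skew_mult \<theta> g [:b:]) = skew_mat \<theta> n a g * skew_mat \<theta> n ahat [:b:]"
  proof (rule eq_matI)
    fix i l assume i: "i < dim_row (skew_mat \<theta> n a g * skew_mat \<theta> n ahat [:b:])"
      and l: "l < dim_col (skew_mat \<theta> n a g * skew_mat \<theta> n ahat [:b:])"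
    hence i: "i < n" and l: "l < n" by (auto simp: skew_mat_def)
    define A where "A = skew_mat \<theta> n a g"
    define B where "B = skew_mat \<theta> n ahat [:b:]"
    have dA: "dim_row A = n" "dim_col A = n" "dim_row B = n" "dim_col B = n"
      by (simp_all add: A_def B_def skew_mat_def)
    have "(A * B) $$ (i, l) = (\<Sum>j = 0..<n. A $$ (i, j) * B $$ (j, l))"
      using i l dA by (simp add: scalar_prod_def)
    also have "\<dots> = (\<Sum>j<n. A $$ (i, j) * (if j = l then (\<theta>^^j) b else 0))"
      using Bent l unfolding B_def lessThan_atLeast0 by (intro sum.cong) auto
    finally have "(skew_mat \<theta> n a g * skew_mat \<theta> n ahat [:b:]) $$ (i, l)
        = (\<Sum>j<n. skew_mat \<theta> n a g $$ (i, j) * (if j = l then (\<theta>^^j) b else 0))"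
      unfolding A_def B_def .
    also have "\<dots> = skew_mat \<theta> n a g $$ (i, l) * (\<theta>^^l) b"
      using l by (simp add: if_distrib cong: if_cong)
    also have "\<dots> = coeff (skew_rem \<theta> n a (skew_mult \<theta> (monom 1 i) g)) l * (\<theta>^^l) b"
      using i l by (simp add: skew_mat_def)
    also have "\<dots> = skew_mat \<theta> n ahat (skew_mult \<theta> g [:b:]) $$ (i, l)"
      using i l by (simp add: skew_mat_def assoc_rc[symmetric] RS sm_const_right)
    finally show "skew_mat \<theta> n ahat (skew_mult \<theta> g [:b:]) $$ (i, l) = (skew_mat \<theta> n a g * skew_mat \<theta> n ahat [:b:]) $$ (i, l)" by simp
  qed (auto simp: skew_mat_def)
  define d where "d = (\<lambda>i. (\<theta>^^i) b)"
  have d0: "\<forall>i<n. d i \<noteq> 0" unfolding d_def using pnz[OF b] by auto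
  have C1: "skew_code \<theta> n a g = range (\<lambda>f. skew_vec \<theta> n a (skew_mult \<theta> f g))"
    unfolding skew_code_def by auto
  have C2: "skew_code \<theta> n ahat (skew_mult \<theta> g [:b:]) = range (\<lambda>f. skew_vec \<theta> n ahat (skew_mult \<theta> f (skew_mult \<theta> g [:b:])))"
    unfolding skew_code_def by auto
  have pt: "scl n d (skew_vec \<theta> n a (skew_mult \<theta> f g)) = skew_vec \<theta> n ahat (skew_mult \<theta> f (skew_mult \<theta> g [:b:]))" for f
    unfolding scl_def skew_vec_def assoc_rc[symmetric] RS
    by (rule eq_vecI) (auto simp: sm_const_right d_def mult.commute)
  have img: "scl n d ` skew_code \<theta> n a g = skew_code \<theta> n ahat (skew_mult \<theta> g [:b:])"
    unfolding C1 C2 image_image pt ..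
  have dims: "\<forall>u\<in>skew_code \<theta> n a g. dim_vec u = n" unfolding C1 by (auto simp: skew_vec_def)
  have P3: "\<exists>d :: nat \<Rightarrow> 'a. (\<forall>i<n. d i \<noteq> 0) \<and>
            (\<lambda>u. vec n (\<lambda>i. d i * u $ i)) ` skew_code \<theta> n a g
              = skew_code \<theta> n ahat (skew_mult \<theta> g [:b:])"
    using d0 img unfolding scl_def by blast
  show ?thesis using P1 P2 P3 scl_facts[OF d0 dims img] by blast
qed
end
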